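(* Let $C$ be a GHZ-preparation circuit on a set of qubits, built as follows: all qubits start in $\ket{0}$, a root qubit $v_0$ is put in the state $\ket{+}$ by a Hadamard gate, and then, layer by layer, CNOT gates are applied whose control is a qubit that has already been excited (entangled) and whose target is a qubit that has not yet been excited, so that every qubit is eventually excited and the ideal output is $\frac{1}{\sqrt 2}(\ket{0}^{\otimes n}+\ket{1}^{\otimes n})$. Suppose the gates and idle timesteps of $C$ form a rooted tree $T=(V,E)$ (the spacetime tree described in the context). For two qubits $i,j$, identified with the leaves of $T$ at the end of the circuit, define the edge set $$S_{i,j} := \mathrm{path}(i,\mathrm{lca}(i,j)) \cup \mathrm{path}(j,\mathrm{lca}(i,j)) \subseteq E,$$ where $\mathrm{lca}(i,j)$ is the lowest common ancestor of $i$ and $j$ in $T$ and $\mathrm{path}(a,b)$ is the set of edges of the unique path in $T$ from $a$ to $b$. Then a single-qubit $X$ or $Y$ error at a spacetime location $(q,t)$ of $C$ is detected by the measurement of $Z_iZ_j$ at the end of $C$ if and only if its corresponding edge in $T$ lies in $S_{i,j}$.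
   Context: Spacetime locations of $C$ are pairs $(q,t)$ with $q$ a qubit and $t$ a layer (timestep) of the circuit; errors are only considered at error-eligible locations, namely $(q,t)$ with $t\ge l_q$, where $l_q$ is the first layer in which qubit $q$ is excited (before that the qubit is in the ground state). The rooted tree $T$ has as root the root qubit at its excitation, its vertices are the excited spacetime locations, and its edges are the wire segments of a qubit between consecutive layers (idle timesteps or continuation through a gate) together with the CNOT links from control to newly excited target; each error-eligible spacetime location $(q,t)$ thus corresponds to an edge of $T$, and the final-time vertex of each qubit is a leaf. A single-qubit Pauli error $E$ at location $(q,t)$ is "detected" by the final measurement of $Z_iZ_j$ if it flips the outcome of that measurement relative to the error-free circuit (for the ideal GHZ state the outcome is $+1$), equivalently if $E$ anticommutes with the operator obtained by propagating $Z_iZ_j$ backwards through the circuit to that location. *)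

theory Defs
  imports Main
begin

text \<open>A circuit is given by a root qubit v0 (put into |+> by a Hadamard gate at
time 0) and a list of layers; layer number t+1 (t < length Ls) is the list
Ls ! t of CNOT gates (control, target). Time t (0 <= t <= D, D = length Ls) denotes the moment right after
layer t (time 0: right after the Hadamard on the root).\<close>

type_synonym 'q layer = "('q \<times> 'q) list"

definition excited :: "'q \<Rightarrow> 'q layer list \<Rightarrow> nat \<Rightarrow> 'q set" where
  "excited v0 Ls t = insert v0 (snd ` set (concat (take t Ls)))"

definition exc_time :: "'q \<Rightarrow> 'q layer list \<Rightarrow> 'q \<Rightarrow> nat" where
  "exc_time v0 Ls q = (LEAST t. q \<in> excited v0 Ls t)"

definition ghz_circuit :: "'q::finite \<Rightarrow> 'q layer list \<Rightarrow> bool" where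
  "ghz_circuit v0 Ls \<longleftrightarrow>
     (\<forall>t < length Ls. \<forall>(c, x) \<in> set (Ls ! t).
         c \<in> excited v0 Ls t \<and> x \<notin> excited v0 Ls t) \<and>
     (\<forall>t < length Ls. distinct (concat (map (\<lambda>(c, x). [c, x]) (Ls ! t)))) \<and>
     excited v0 Ls (length Ls) = UNIV"

text \<open>A Pauli operator up to phase is given by its X-part and Z-part.\<close>
type_synonym 'q pauli = "('q \<Rightarrow> bool) \<times> ('q \<Rightarrow> bool)"

definition anticommute :: "'q::finite pauli \<Rightarrow> 'q pauli \<Rightarrow> bool" where
  "anticommute P R \<longleftrightarrow>
     odd (card {p. fst P p \<and> snd R p} + card {p. snd P p \<and> fst R p})"

text \<open>Conjugation by CNOT(c,x) (self-inverse): X_c -> X_c X_x, Z_x -> Z_c Z_x.\<close>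
definition cnot_conj :: "'q \<times> 'q \<Rightarrow> 'q pauli \<Rightarrow> 'q pauli" where
  "cnot_conj g P = (case g of (c, x) \<Rightarrow>
      ((fst P)(x := (fst P x \<noteq> fst P c)), (snd P)(c := (snd P c \<noteq> snd P x))))"

definition layer_conj :: "'q layer \<Rightarrow> 'q pauli \<Rightarrow> 'q pauli" where
  "layer_conj L P = fold cnot_conj L P"

text \<open>Propagate an operator at the end of the circuit backwards to time t,
i.e. through layers D, D-1, ..., t+1.\<close>
definition backprop :: "'q layer list \<Rightarrow> nat \<Rightarrow> 'q pauli \<Rightarrow> 'q pauli" where
  "backprop Ls t P = fold layer_conj (rev (drop t Ls)) P"

definition ZZ :: "'q \<Rightarrow> 'q \<Rightarrow> 'q pauli" where
  "ZZ i j = ((\<lambda>_. False), (\<lambda>p. (p = i) \<noteq> (p = j)))"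

definition X_at :: "'q \<Rightarrow> 'q pauli" where
  "X_at q = ((\<lambda>p. p = q), (\<lambda>_. False))"

definition Y_at :: "'q \<Rightarrow> 'q pauli" where
  "Y_at q = ((\<lambda>p. p = q), (\<lambda>p. p = q))"

definition detected :: "'q::finite layer list \<Rightarrow> 'q pauli \<Rightarrow> nat \<Rightarrow> 'q \<Rightarrow> 'q \<Rightarrow> bool" where
  "detected Ls E t i j \<longleftrightarrow> anticommute E (backprop Ls t (ZZ i j))"

text \<open>Vertices: excited spacetime locations Loc q t, plus an extra vertex Start
(the Hadamard preparation) below the root Loc v0 0, so that the root location
(v0,0) also corresponds to an edge.\<close>
datatype 'q node = Start | Loc 'q nat

definition tree_edges :: "'q \<Rightarrow> 'q layer list \<Rightarrow> 'q node set set" where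
  "tree_edges v0 Ls =
     {{Start, Loc v0 0}}
     \<union> {{Loc q t, Loc q (Suc t)} | q t. exc_time v0 Ls q \<le> t \<and> t < length Ls}
     \<union> {{Loc c t, Loc x (Suc t)} | c x t. t < length Ls \<and> (c, x) \<in> set (Ls ! t)}"

definition simple_path :: "'v set set \<Rightarrow> 'v \<Rightarrow> 'v \<Rightarrow> 'v list \<Rightarrow> bool" where
  "simple_path G a b p \<longleftrightarrow> p \<noteq> [] \<and> hd p = a \<and> last p = b \<and> distinct p \<and>
     (\<forall>k. Suc k < length p \<longrightarrow> {p ! k, p ! Suc k} \<in> G)"

definition walk_edges :: "'v list \<Rightarrow> 'v set set" where
  "walk_edges p = {{p ! k, p ! Suc k} | k. Suc k < length p}"

definition path_edges :: "'v set set \<Rightarrow> 'v \<Rightarrow> 'v \<Rightarrow> 'v set set" where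
  "path_edges G a b = \<Union> {walk_edges p | p. simple_path G a b p}"

definition ancestor :: "'v set set \<Rightarrow> 'v \<Rightarrow> 'v \<Rightarrow> 'v \<Rightarrow> bool" where
  "ancestor G r a v \<longleftrightarrow> (\<exists>p. simple_path G r v p \<and> a \<in> set p)"

definition lca :: "'v set set \<Rightarrow> 'v \<Rightarrow> 'v \<Rightarrow> 'v \<Rightarrow> 'v" where
  "lca G r u v = (THE w. ancestor G r w u \<and> ancestor G r w v \<and>
      (\<forall>w'. ancestor G r w' u \<and> ancestor G r w' v \<longrightarrow> ancestor G r w' w))"

definition loc_edge :: "'q \<Rightarrow> 'q layer list \<Rightarrow> 'q \<Rightarrow> nat \<Rightarrow> 'q node set" where
  "loc_edge v0 Ls q t = (THE e. e \<in> path_edges (tree_edges v0 Ls) Start (Loc q t)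
                                 \<and> Loc q t \<in> e)"

definition S_set :: "'q \<Rightarrow> 'q layer list \<Rightarrow> 'q \<Rightarrow> 'q \<Rightarrow> 'q node set set" where
  "S_set v0 Ls i j =
     (let T = tree_edges v0 Ls; D = length Ls;
          w = lca T (Loc v0 0) (Loc i D) (Loc j D)
      in path_edges T (Loc i D) w \<union> path_edges T (Loc j D) w)"

end

theory Submission
  imports Defs
begin

lemma walk_edges_Nil[simp]: "walk_edges [] = {}"
  by (auto simp: walk_edges_def)

lemma walk_edges_single[simp]: "walk_edges [x] = {}"
  by (auto simp: walk_edges_def)

lemma walk_edges_Cons2[simp]: "walk_edges (x # y # p) = insert {x, y} (walk_edges (y # p))"
proof -
  have "walk_edges (x # y # p) \<subseteq> insert {x, y} (walk_edges (y # p))"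
  proof
    fix e assume "e \<in> walk_edges (x # y # p)"
    then obtain k where k: "Suc k < length (x # y # p)" "e = {(x#y#p) ! k, (x#y#p) ! Suc k}"
      by (auto simp: walk_edges_def)
    show "e \<in> insert {x, y} (walk_edges (y # p))"
    proof (cases k)
      case 0 then show ?thesis using k by simp
    next
      case (Suc m) then show ?thesis using k by (auto simp: walk_edges_def)
    qed
  qed
  moreover have "insert {x, y} (walk_edges (y # p)) \<subseteq> walk_edges (x # y # p)"
  proof
    fix e assume "e \<in> insert {x, y} (walk_edges (y # p))"
    then show "e \<in> walk_edges (x # y # p)"
    proof
      assume "e = {x, y}" then show ?thesis unfolding walk_edges_def
        by (rule_tac CollectI, rule_tac x=0 in exI) simp
    next
      assume "e \<in> walk_edges (y # p)"
      then obtain k where k: "Suc k < length (y # p)" "e = {(y#p) ! k, (y#p) ! Suc k}"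
        by (auto simp: walk_edges_def)
      show ?thesis unfolding walk_edges_def
        by (rule_tac CollectI, rule_tac x="Suc k" in exI) (use k in simp)
    qed
  qed
  ultimately show ?thesis by blast
qed

lemma walk_edges_rev: "walk_edges (rev p) = walk_edges p"
proof -
  have "walk_edges (rev p) \<subseteq> walk_edges p" for p :: "'a list"
  proof
    fix e assume "e \<in> walk_edges (rev p)"
    then obtain k where k: "Suc k < length p" "e = {rev p ! k, rev p ! Suc k}"
      by (auto simp: walk_edges_def)
    define k' where "k' = length p - 2 - k"
    have "rev p ! k = p ! Suc k'" "rev p ! Suc k = p ! k'"
      using k by (auto simp: rev_nth k'_def Suc_diff_Suc)
    then have "e = {p ! k', p ! Suc k'}" using k by auto
    moreover have "Suc k' < length p" using k by (auto simp: k'_def)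
    ultimately show "e \<in> walk_edges p" by (auto simp: walk_edges_def)
  qed
  from this[of p] this[of "rev p"] show ?thesis by auto
qed

lemma walk_edges_subset: "e \<in> walk_edges p \<Longrightarrow> e \<subseteq> set p"
  by (auto simp: walk_edges_def)

lemma simple_path_alt: "simple_path G a b p \<longleftrightarrow>
   p \<noteq> [] \<and> hd p = a \<and> last p = b \<and> distinct p \<and> walk_edges p \<subseteq> G"
  by (auto simp: simple_path_def walk_edges_def)

lemma simple_path_rev: "simple_path G a b p \<Longrightarrow> simple_path G b a (rev p)"
  by (auto simp: simple_path_alt walk_edges_rev hd_rev last_rev)

lemma path_edges_sym: "path_edges G a b = path_edges G b a"
proof -
  have "path_edges G a b \<subseteq> path_edges G b a" for a b
    unfolding path_edges_def using simple_path_rev walk_edges_rev by fastforce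
  then show ?thesis by blast
qed

definition pGE :: "('v \<Rightarrow> 'v) \<Rightarrow> 'v set \<Rightarrow> 'v set set" where
  "pGE par W = {{par w, w} | w. w \<in> W}"

definition pdesc :: "('v \<Rightarrow> 'v) \<Rightarrow> 'v \<Rightarrow> 'v set" where
  "pdesc par u = {v. \<exists>n. (par ^^ n) v = u}"

definition upp :: "('v \<Rightarrow> 'v) \<Rightarrow> 'v \<Rightarrow> nat \<Rightarrow> 'v list" where
  "upp par v n = map (\<lambda>k. (par ^^ k) v) [0..<Suc n]"

locale ptree =
  fixes par :: "'v \<Rightarrow> 'v" and lvl :: "'v \<Rightarrow> nat" and W :: "'v set" and S0 R :: 'v
  assumes lvl_par: "lvl (par v) = lvl v - 1"
  and lvl0: "lvl v = 0 \<Longrightarrow> v = S0"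
  and W_pos: "w \<in> W \<Longrightarrow> 0 < lvl w"
  and W_par: "w \<in> W \<Longrightarrow> 0 < lvl (par w) \<Longrightarrow> par w \<in> W"
  and W_1: "w \<in> W \<Longrightarrow> lvl w = 1 \<Longrightarrow> w = R"
  and R_W: "R \<in> W"
  and lvl_R: "lvl R = 1"
begin

abbreviation "GE \<equiv> pGE par W"
abbreviation "desc \<equiv> pdesc par"

lemma lvl_funpow: "lvl ((par ^^ n) v) = lvl v - n"
  by (induction n) (auto simp: lvl_par)

lemma funpow_W: "v \<in> W \<Longrightarrow> 0 < lvl ((par ^^ n) v) \<Longrightarrow> (par ^^ n) v \<in> W"
proof (induction n)
  case 0 then show ?case by simp
next
  case (Suc n)
  have "0 < lvl ((par ^^ n) v)" using Suc.prems by (simp add: lvl_par)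
  then show ?case using Suc W_par by simp
qed

lemma desc_self[simp]: "u \<in> desc u"
  unfolding pdesc_def by (rule CollectI, rule exI[of _ 0]) simp

lemma par_desc: "w \<noteq> u \<Longrightarrow> w \<in> desc u \<Longrightarrow> par w \<in> desc u"
proof -
  assume a: "w \<noteq> u" "w \<in> desc u"
  then obtain n where n: "(par ^^ n) w = u" by (auto simp: pdesc_def)
  with a obtain m where "n = Suc m" by (cases n) auto
  then have "(par ^^ m) (par w) = u" using n by (simp add: funpow_Suc_right del: funpow.simps)
  then show ?thesis by (auto simp: pdesc_def)
qed

lemma desc_par: "par w \<in> desc u \<Longrightarrow> w \<in> desc u"
proof -
  assume "par w \<in> desc u"
  then obtain n where n: "(par ^^ n) (par w) = u" by (auto simp: pdesc_def)
  then have "(par ^^ Suc n) w = u" by (simp add: funpow_Suc_right del: funpow.simps)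
  then show ?thesis unfolding pdesc_def by blast
qed

lemma par_notin: "0 < lvl u \<Longrightarrow> par u \<notin> desc u"
proof
  assume a: "0 < lvl u" "par u \<in> desc u"
  then obtain n where n: "(par ^^ n) (par u) = u" by (auto simp: pdesc_def)
  have "lvl ((par ^^ n) (par u)) = lvl u - 1 - n" by (simp add: lvl_funpow lvl_par)
  with n a(1) show False by simp
qed

lemma par_neq: "0 < lvl u \<Longrightarrow> par u \<noteq> u"
  using lvl_par[of u] by auto

lemma desc_trans: "x \<in> desc y \<Longrightarrow> y \<in> desc z \<Longrightarrow> x \<in> desc z"
  unfolding pdesc_def by clarify (metis funpow_add comp_apply)

lemma desc_lvl: "x \<in> desc y \<Longrightarrow> lvl y \<le> lvl x"
  unfolding pdesc_def using lvl_funpow by auto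

lemma desc_same_lvl: "v \<in> desc a \<Longrightarrow> v \<in> desc b \<Longrightarrow> lvl a = lvl b \<Longrightarrow> 0 < lvl a \<Longrightarrow> a = b"
proof -
  assume a: "v \<in> desc a" "v \<in> desc b" "lvl a = lvl b" "0 < lvl a"
  then obtain n m where n: "(par ^^ n) v = a" and m: "(par ^^ m) v = b" by (auto simp: pdesc_def)
  have "lvl v - n = lvl v - m" "0 < lvl v - n" using a n m lvl_funpow by metis+
  then have "n = m" by linarith
  then show ?thesis using n m by simp
qed

lemma desc_eq: "x \<in> desc y \<Longrightarrow> lvl x = lvl y \<Longrightarrow> x = y"
proof -
  assume a: "x \<in> desc y" "lvl x = lvl y"
  then obtain n where n: "(par ^^ n) x = y" by (auto simp: pdesc_def)
  show ?thesis
  proof (cases "lvl x = 0")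
    case True then show ?thesis using a lvl0 by metis
  next
    case False
    have "lvl y = lvl x - n" using n lvl_funpow by metis
    then have "n = 0" using a False by linarith
    then show ?thesis using n by simp
  qed
qed

lemma cut: "distinct p \<Longrightarrow> walk_edges p \<subseteq> GE \<Longrightarrow> p \<noteq> [] \<Longrightarrow> 0 < lvl u \<Longrightarrow>
  ({par u, u} \<in> walk_edges p \<longleftrightarrow> ((hd p \<in> desc u) \<noteq> (last p \<in> desc u)))"
proof (induction p)
  case Nil then show ?case by simp
next
  case (Cons x p)
  show ?case
  proof (cases p)
    case Nil then show ?thesis by simp
  next
    case (Cons y p')
    have IH: "{par u, u} \<in> walk_edges p \<longleftrightarrow> ((y \<in> desc u) \<noteq> (last p \<in> desc u))"
      using Cons.IH Cons.prems Cons by auto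
    have xy: "{x, y} \<in> GE" using Cons.prems Cons by auto
    show ?thesis
    proof (cases "{x, y} = {par u, u}")
      case True
      have pu: "par u \<noteq> u" using par_neq Cons.prems by auto
      have "x \<notin> set p" using Cons.prems by auto
      have notin: "{par u, u} \<notin> walk_edges p"
      proof
        assume "{par u, u} \<in> walk_edges p"
        then have "{par u, u} \<subseteq> set p" by (rule walk_edges_subset)
        with True \<open>x \<notin> set p\<close> show False by (auto simp: doubleton_eq_iff)
      qed
      have "(x \<in> desc u) \<noteq> (y \<in> desc u)"
        using True par_notin[OF Cons.prems(4)] desc_self pu by (auto simp: doubleton_eq_iff)
      then show ?thesis using IH notin True Cons by auto
    next
      case False
      obtain w where w: "{x, y} = {par w, w}" "w \<in> W" using xy by (auto simp: pGE_def)
      have "w \<noteq> u" using False w by auto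
      then have "(x \<in> desc u) \<longleftrightarrow> (y \<in> desc u)" using w par_desc desc_par
        by (auto simp: doubleton_eq_iff)
      then show ?thesis using IH False Cons by auto
    qed
  qed
qed

lemma upp_nth: "k \<le> n \<Longrightarrow> upp par v n ! k = (par ^^ k) v"
  unfolding upp_def by (simp del: upt_Suc add: nth_map_upt)

lemma upp_len[simp]: "length (upp par v n) = Suc n"
  unfolding upp_def by simp

lemma upp_simple: "v \<in> W \<Longrightarrow> n \<le> lvl v \<Longrightarrow> simple_path GE v ((par ^^ n) v) (upp par v n)"
proof -
  assume v: "v \<in> W" "n \<le> lvl v"
  have ne: "upp par v n \<noteq> []" by (simp add: upp_def)
  have hd: "hd (upp par v n) = v" using upp_nth[of 0 n v] ne by (simp add: hd_conv_nth)
  have last: "last (upp par v n) = (par ^^ n) v" using upp_nth[of n n v] ne by (simp add: last_conv_nth)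
  have inj: "inj_on (\<lambda>k. (par ^^ k) v) {0..<Suc n}"
  proof (rule inj_onI)
    fix a b assume ab: "a \<in> {0..<Suc n}" "b \<in> {0..<Suc n}" "(par ^^ a) v = (par ^^ b) v"
    then have "lvl v - a = lvl v - b" using lvl_funpow by metis
    then show "a = b" using ab v by auto
  qed
  have dist: "distinct (upp par v n)" unfolding upp_def using inj by (simp add: distinct_map del: upt_Suc)
  have edges: "walk_edges (upp par v n) \<subseteq> GE"
  proof
    fix e assume "e \<in> walk_edges (upp par v n)"
    then obtain k where k: "Suc k < Suc n" "e = {upp par v n ! k, upp par v n ! Suc k}"
      by (auto simp: walk_edges_def)
    then have e: "e = {par ((par ^^ k) v), (par ^^ k) v}" using upp_nth[of k n v] upp_nth[of "Suc k" n v]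
      by auto
    have "0 < lvl ((par ^^ k) v)" using k v lvl_funpow by simp
    then have "(par ^^ k) v \<in> W" using funpow_W v by blast
    then show "e \<in> GE" using e by (auto simp: pGE_def)
  qed
  show ?thesis using ne hd last dist edges by (simp add: simple_path_alt)
qed

lemma path_edges_GE: "path_edges GE a b \<subseteq> GE"
  unfolding path_edges_def by (auto simp: simple_path_alt)

lemma path_edges_up: "a \<in> W \<Longrightarrow> b = (par ^^ n) a \<Longrightarrow> n \<le> lvl a \<Longrightarrow> 0 < lvl u \<Longrightarrow>
   ({par u, u} \<in> path_edges GE a b \<longleftrightarrow> ((a \<in> desc u) \<noteq> (b \<in> desc u)))"
proof -
  assume a: "a \<in> W" "b = (par ^^ n) a" "n \<le> lvl a" "0 < lvl u"
  have sp: "simple_path GE a b (upp par a n)" using upp_simple a by simp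
  show ?thesis
  proof
    assume "{par u, u} \<in> path_edges GE a b"
    then obtain p where "simple_path GE a b p" "{par u, u} \<in> walk_edges p"
      unfolding path_edges_def by auto
    then show "(a \<in> desc u) \<noteq> (b \<in> desc u)" using cut[of p u] a by (auto simp: simple_path_alt)
  next
    assume "(a \<in> desc u) \<noteq> (b \<in> desc u)"
    then have "{par u, u} \<in> walk_edges (upp par a n)" using cut[of "upp par a n" u] sp a
      by (auto simp: simple_path_alt)
    then show "{par u, u} \<in> path_edges GE a b" using sp unfolding path_edges_def by auto
  qed
qed

lemma R_anc: "v \<in> W \<Longrightarrow> (par ^^ (lvl v - 1)) v = R"
proof -
  assume v: "v \<in> W"
  have l: "lvl ((par ^^ (lvl v - 1)) v) = 1" using W_pos[OF v] lvl_funpow by simp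
  then have "(par ^^ (lvl v - 1)) v \<in> W" using funpow_W v by simp
  then show ?thesis using W_1 l by blast
qed

lemma R_desc: "v \<in> W \<Longrightarrow> v \<in> desc R"
  using R_anc unfolding pdesc_def by blast

lemma desc_W: "v \<in> W \<Longrightarrow> v \<in> desc a \<Longrightarrow> 0 < lvl a \<Longrightarrow> a \<in> W"
  unfolding pdesc_def using funpow_W by blast

lemma anc_iff: "v \<in> W \<Longrightarrow> ancestor GE R a v \<longleftrightarrow> (v \<in> desc a \<and> 0 < lvl a)"
proof
  assume v: "v \<in> W" and "ancestor GE R a v"
  then obtain p where p: "simple_path GE R v p" "a \<in> set p" by (auto simp: ancestor_def)
  then obtain m where m: "m < length p" "p ! m = a" by (auto simp: in_set_conv_nth)
  show "v \<in> desc a \<and> 0 < lvl a"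
  proof (cases "Suc m = length p")
    case True
    then have "m = length p - 1" by simp
    then have "a = v" using m p by (auto simp: simple_path_alt last_conv_nth)
    then show ?thesis using W_pos v by auto
  next
    case False
    then have "{p ! m, p ! Suc m} \<in> walk_edges p" using m by (auto simp: walk_edges_def)
    moreover then have "{p ! m, p ! Suc m} \<in> GE" using p by (auto simp: simple_path_alt)
    then obtain w where w: "{p ! m, p ! Suc m} = {par w, w}" "w \<in> W" by (auto simp: pGE_def)
    ultimately have "{par w, w} \<in> walk_edges p" by simp
    then have c: "(R \<in> desc w) \<noteq> (v \<in> desc w)" using cut[of p w] p W_pos[OF w(2)]
      by (auto simp: simple_path_alt)
    have "w \<noteq> R"
    proof
      assume "w = R" then show False using c R_desc v by auto
    qed
    have "R \<notin> desc w"
    proof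
      assume "R \<in> desc w"
      then have "lvl w \<le> 1" using desc_lvl lvl_R by fastforce
      then show False using W_1 w(2) \<open>w \<noteq> R\<close> W_pos[OF w(2)] by auto
    qed
    then have vw: "v \<in> desc w" using c by auto
    have "a = par w \<or> a = w" using w m by (auto simp: doubleton_eq_iff)
    then show ?thesis
    proof
      assume "a = w" then show ?thesis using vw W_pos w by auto
    next
      assume "a = par w"
      moreover have "lvl w \<noteq> 1" using W_1 w(2) \<open>w \<noteq> R\<close> by auto
      moreover have "par w \<in> desc (par w)" by simp
      ultimately show ?thesis using vw W_pos[OF w(2)] lvl_par[of w] desc_trans[of v w "par w"]
        by (auto simp: pdesc_def) (metis funpow_0 funpow_Suc_right comp_apply)
    qed
  qed
next
  assume v: "v \<in> W" and a: "v \<in> desc a \<and> 0 < lvl a"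
  then obtain n where n: "(par ^^ n) v = a" by (auto simp: pdesc_def)
  have "lvl a = lvl v - n" using n lvl_funpow by metis
  then have nl: "n \<le> lvl v - 1" using a by auto
  have sp: "simple_path GE R v (rev (upp par v (lvl v - 1)))"
    using simple_path_rev[OF upp_simple[OF v, of "lvl v - 1"]] R_anc[OF v] by simp
  have "a \<in> set (upp par v (lvl v - 1))" using upp_nth[OF nl, of v] n nl
    by (metis le_imp_less_Suc nth_mem upp_len)
  then show "ancestor GE R a v" using sp unfolding ancestor_def by (intro exI[of _ "rev (upp par v (lvl v - 1))"]) auto
qed

lemma lca_char:
  assumes v1: "v1 \<in> W" and v2: "v2 \<in> W"
  obtains w where "lca GE R v1 v2 = w" "v1 \<in> desc w" "v2 \<in> desc w" "0 < lvl w"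
    "\<And>w'. v1 \<in> desc w' \<Longrightarrow> v2 \<in> desc w' \<Longrightarrow> 0 < lvl w' \<Longrightarrow> w \<in> desc w'"
proof -
  define C where "C = {x. v1 \<in> desc x \<and> v2 \<in> desc x \<and> 0 < lvl x}"
  have "(par ^^ (lvl v1 - 1)) v1 \<in> C" using R_anc[OF v1] R_desc[OF v1] R_desc[OF v2] lvl_R
    by (simp add: C_def)
  define n0 where "n0 = (LEAST n. (par ^^ n) v1 \<in> C)"
  define w where "w = (par ^^ n0) v1"
  have wC: "w \<in> C" unfolding w_def n0_def by (rule LeastI) fact
  have wmin: "w \<in> desc w'" if "w' \<in> C" for w'
  proof -
    from that have "v1 \<in> desc w'" by (simp add: C_def)
    then obtain m where m: "(par ^^ m) v1 = w'" unfolding pdesc_def by blast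
    then have "n0 \<le> m" unfolding n0_def using that by (auto intro: Least_le)
    then have "(par ^^ (m - n0)) w = w'" using m unfolding w_def
      by (metis funpow_add comp_apply le_add_diff_inverse2)
    then show ?thesis by (auto simp: pdesc_def)
  qed
  have wW: "w \<in> W" using wC desc_W[OF v1] by (auto simp: C_def)
  have P: "ancestor GE R w v1 \<and> ancestor GE R w v2 \<and>
      (\<forall>w'. ancestor GE R w' v1 \<and> ancestor GE R w' v2 \<longrightarrow> ancestor GE R w' w)"
    using wC wmin anc_iff[OF v1] anc_iff[OF v2] anc_iff[OF wW] by (auto simp: C_def)
  have "lca GE R v1 v2 = w" unfolding lca_def
  proof (rule the_equality)
    show "ancestor GE R w v1 \<and> ancestor GE R w v2 \<and>
      (\<forall>w'. ancestor GE R w' v1 \<and> ancestor GE R w' v2 \<longrightarrow> ancestor GE R w' w)" by (rule P)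
  next
    fix w2 assume w2: "ancestor GE R w2 v1 \<and> ancestor GE R w2 v2 \<and>
      (\<forall>w'. ancestor GE R w' v1 \<and> ancestor GE R w' v2 \<longrightarrow> ancestor GE R w' w2)"
    then have w2C: "w2 \<in> C" using anc_iff[OF v1] anc_iff[OF v2] by (auto simp: C_def)
    then have w2W: "w2 \<in> W" using desc_W[OF v1] by (auto simp: C_def)
    have "w2 \<in> desc w" using w2 P anc_iff[OF w2W] by blast
    moreover have "w \<in> desc w2" using wmin w2C by blast
    ultimately show "w2 = w" using desc_lvl desc_eq by (metis le_antisym)
  qed
  then show ?thesis using that wC wmin by (auto simp: C_def)
qed

lemma S_main:
  assumes u: "u \<in> W" and v1: "v1 \<in> W" and v2: "v2 \<in> W"
  shows "{par u, u} \<in> path_edges GE v1 (lca GE R v1 v2) \<union> path_edges GE v2 (lca GE R v1 v2)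
     \<longleftrightarrow> ((v1 \<in> desc u) \<noteq> (v2 \<in> desc u))"
proof -
  obtain w where w: "lca GE R v1 v2 = w" "v1 \<in> desc w" "v2 \<in> desc w" "0 < lvl w"
    "\<And>w'. v1 \<in> desc w' \<Longrightarrow> v2 \<in> desc w' \<Longrightarrow> 0 < lvl w' \<Longrightarrow> w \<in> desc w'"
    using lca_char[OF v1 v2] by blast
  obtain n1 where n1: "(par ^^ n1) v1 = w" using w by (auto simp: pdesc_def)
  obtain n2 where n2: "(par ^^ n2) v2 = w" using w by (auto simp: pdesc_def)
  have "n1 \<le> lvl v1" using n1 w(4) lvl_funpow[of n1 v1] by simp
  have "n2 \<le> lvl v2" using n2 w(4) lvl_funpow[of n2 v2] by simp
  have lu: "0 < lvl u" using W_pos u by simp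
  have e1: "{par u, u} \<in> path_edges GE v1 w \<longleftrightarrow> ((v1 \<in> desc u) \<noteq> (w \<in> desc u))"
    using path_edges_up[OF v1 n1[symmetric] \<open>n1 \<le> lvl v1\<close> lu] .
  have e2: "{par u, u} \<in> path_edges GE v2 w \<longleftrightarrow> ((v2 \<in> desc u) \<noteq> (w \<in> desc u))"
    using path_edges_up[OF v2 n2[symmetric] \<open>n2 \<le> lvl v2\<close> lu] .
  have t1: "w \<in> desc u \<Longrightarrow> v1 \<in> desc u" using desc_trans w(2) by blast
  have t2: "w \<in> desc u \<Longrightarrow> v2 \<in> desc u" using desc_trans w(3) by blast
  have t3: "v1 \<in> desc u \<Longrightarrow> v2 \<in> desc u \<Longrightarrow> w \<in> desc u" using w(5) lu by blast
  show ?thesis unfolding w(1) e1 e2 Un_iff using t1 t2 t3 by blast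
qed

lemma loc_edge_main:
  assumes u: "u \<in> W"
  shows "(THE e. e \<in> path_edges GE S0 u \<and> u \<in> e) = {par u, u}"
proof -
  have lu: "0 < lvl u" using W_pos u by simp
  have S0: "(par ^^ lvl u) u = S0" using lvl0 lvl_funpow by simp
  have S0d: "S0 \<notin> desc w" if "w \<in> W" for w
  proof
    assume "S0 \<in> desc w"
    then have "lvl w \<le> lvl S0" by (rule desc_lvl)
    moreover have "lvl S0 = 0" using S0 lvl_funpow[of "lvl u" u] by simp
    ultimately show False using W_pos[OF that] by simp
  qed
  have pe: "e \<in> path_edges GE S0 u \<longleftrightarrow> e \<in> path_edges GE u S0" for e
    using path_edges_sym by metis
  show ?thesis
  proof (rule the_equality)
    show "{par u, u} \<in> path_edges GE S0 u \<and> u \<in> {par u, u}"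
      using pe path_edges_up[OF u S0[symmetric] le_refl lu] S0d[OF u] by simp
  next
    fix e assume e: "e \<in> path_edges GE S0 u \<and> u \<in> e"
    then have "e \<in> GE" using path_edges_GE pe by blast
    then obtain w where w: "e = {par w, w}" "w \<in> W" by (auto simp: pGE_def)
    have "(u \<in> desc w) \<noteq> (S0 \<in> desc w)"
      using e pe path_edges_up[OF u S0[symmetric] le_refl W_pos[OF w(2)]] w by simp
    then have uw: "u \<in> desc w" using S0d[OF w(2)] by simp
    have "u = w"
    proof (rule ccontr)
      assume "u \<noteq> w"
      then have "u = par w" using e w by auto
      then show False using uw desc_lvl lvl_par[of w] W_pos[OF w(2)] by fastforce
    qed
    then show "e = {par u, u}" using w by simp
  qed
qed

end


fun npar :: "'q \<Rightarrow> 'q layer list \<Rightarrow> 'q node \<Rightarrow> 'q node" where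
  "npar v0 Ls Start = Start"
| "npar v0 Ls (Loc q 0) = Start"
| "npar v0 Ls (Loc q (Suc t)) = (if exc_time v0 Ls q \<le> t then Loc q t
      else Loc (SOME c. (c, q) \<in> set (Ls ! t)) t)"

fun nlvl :: "'q node \<Rightarrow> nat" where
  "nlvl Start = 0"
| "nlvl (Loc q t) = Suc t"

definition Wset :: "'q \<Rightarrow> 'q layer list \<Rightarrow> 'q node set" where
  "Wset v0 Ls = {Loc q t | q t. exc_time v0 Ls q \<le> t \<and> t \<le> length Ls}"

abbreviation dq :: "'q layer \<Rightarrow> bool" where
  "dq L \<equiv> distinct (concat (map (\<lambda>(c, x). [c, x]) L))"

lemma dq_mem: "(a, b) \<in> set L \<Longrightarrow> a \<in> set (concat (map (\<lambda>(c, x). [c, x]) L)) \<and> b \<in> set (concat (map (\<lambda>(c, x). [c, x]) L))"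
  by force

lemma dq_unique: "dq L \<Longrightarrow> (a, b) \<in> set L \<Longrightarrow> (a', b') \<in> set L \<Longrightarrow> a = a' \<or> b = b' \<Longrightarrow> (a, b) = (a', b')"
proof (induction L)
  case Nil then show ?case by simp
next
  case (Cons g L)
  obtain c x where g: "g = (c, x)" by (cases g)
  have d: "c \<notin> set (concat (map (\<lambda>(c, x). [c, x]) L))" "x \<notin> set (concat (map (\<lambda>(c, x). [c, x]) L))"
    "dq L" "c \<noteq> x"
    using Cons.prems(1) g by auto
  let ?Q = "set (concat (map (\<lambda>(c, x). [c, x]) L))"
  consider "(a, b) = g" "(a', b') = g" | "(a, b) = g" "(a', b') \<in> set L"
    | "(a, b) \<in> set L" "(a', b') = g" | "(a, b) \<in> set L" "(a', b') \<in> set L"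
    using Cons.prems(2,3) by auto
  then show ?case
  proof cases
    case 1 then show ?thesis by simp
  next
    case 2
    have "a' \<in> ?Q" "b' \<in> ?Q" using dq_mem[OF 2(2)] by auto
    then show ?thesis using 2 d Cons.prems(4) g by auto
  next
    case 3
    have "a \<in> ?Q" "b \<in> ?Q" using dq_mem[OF 3(1)] by auto
    then show ?thesis using 3 d Cons.prems(4) g by auto
  next
    case 4 then show ?thesis using Cons.IH[OF d(3)] Cons.prems(4) by blast
  qed
qed

lemma cnot_snd: "snd (cnot_conj (c, x) P) = (snd P)(c := (snd P c \<noteq> snd P x))"
  by (simp add: cnot_conj_def)

lemma cnot_fst: "fst (cnot_conj (c, x) P) = (fst P)(x := (fst P x \<noteq> fst P c))"
  by (simp add: cnot_conj_def)

lemma fold_fst: "fst P = (\<lambda>_. False) \<Longrightarrow> fst (fold cnot_conj L P) = (\<lambda>_. False)"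
proof (induction L arbitrary: P)
  case Nil then show ?case by simp
next
  case (Cons g L)
  obtain c x where g: "g = (c, x)" by (cases g)
  have "fst (cnot_conj g P) = (\<lambda>_. False)" using Cons.prems g by (auto simp: cnot_fst)
  then show ?case using Cons.IH by simp
qed

lemma fold_snd_other: "(\<forall>x. (p, x) \<notin> set L) \<Longrightarrow> snd (fold cnot_conj L P) p = snd P p"
proof (induction L arbitrary: P)
  case Nil then show ?case by simp
next
  case (Cons g L)
  obtain c x where g: "g = (c, x)" by (cases g)
  have "snd (cnot_conj g P) p = snd P p" using Cons.prems g by (auto simp: cnot_snd)
  then show ?case using Cons.IH Cons.prems by simp
qed

lemma fold_snd_ctrl: "dq L \<Longrightarrow> (p, x) \<in> set L \<Longrightarrow> snd (fold cnot_conj L P) p = (snd P p \<noteq> snd P x)"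
proof (induction L arbitrary: P)
  case Nil then show ?case by simp
next
  case (Cons g L)
  obtain c y where g: "g = (c, y)" by (cases g)
  have d: "c \<notin> set (concat (map (\<lambda>(c, x). [c, x]) L))" "y \<notin> set (concat (map (\<lambda>(c, x). [c, x]) L))"
    "dq L" "c \<noteq> y"
    using Cons.prems(1) g by auto
  show ?case
  proof (cases "(p, x) = (c, y)")
    case True
    have nc: "\<forall>z. (c, z) \<notin> set L"
    proof (intro allI notI)
      fix z assume "(c, z) \<in> set L"
      then have "c \<in> set (concat (map (\<lambda>(c, x). [c, x]) L))" using dq_mem[of c z L] by simp
      then show False using d(1) by blast
    qed
    have pc: "p = c" "x = y" using True by auto
    have "snd (fold cnot_conj L (cnot_conj g P)) c = snd (cnot_conj g P) c"
      by (rule fold_snd_other) (rule nc)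
    then show ?thesis using pc g by (simp add: cnot_snd)
  next
    case False
    then have pxL: "(p, x) \<in> set L" using Cons.prems g by auto
    have "p \<noteq> c" "x \<noteq> c" using d(1) dq_mem[OF pxL] by auto
    then show ?thesis using Cons.IH[OF d(3) pxL, of "cnot_conj g P"] g by (simp add: cnot_snd)
  qed
qed

lemma bp_Suc: "t < length Ls \<Longrightarrow> backprop Ls t P = layer_conj (Ls ! t) (backprop Ls (Suc t) P)"
  unfolding backprop_def by (simp add: Cons_nth_drop_Suc[symmetric])

lemma bp_end: "backprop Ls (length Ls) P = P"
  unfolding backprop_def by simp

lemma excited_mono: "s \<le> t \<Longrightarrow> excited v0 Ls s \<subseteq> excited v0 Ls t"
proof -
  assume "s \<le> t"
  then obtain k where "t = s + k" using le_Suc_ex by blast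
  then show ?thesis unfolding excited_def by (auto simp: take_add)
qed

lemma excited_Suc: "t < length Ls \<Longrightarrow> excited v0 Ls (Suc t) = excited v0 Ls t \<union> snd ` set (Ls ! t)"
  unfolding excited_def by (auto simp: take_Suc_conv_app_nth)

lemma excited_ge: "length Ls \<le> t \<Longrightarrow> excited v0 Ls t = excited v0 Ls (length Ls)"
  unfolding excited_def by simp

lemma excited_0: "excited v0 Ls 0 = {v0}"
  unfolding excited_def by simp

locale ghz =
  fixes v0 :: "'q::finite" and Ls :: "'q layer list"
  assumes g: "ghz_circuit v0 Ls"
begin

abbreviation "D \<equiv> length Ls"
abbreviation "exc \<equiv> exc_time v0 Ls"
abbreviation "ex \<equiv> excited v0 Ls"

lemma G1: "t < D \<Longrightarrow> (c, x) \<in> set (Ls ! t) \<Longrightarrow> c \<in> ex t \<and> x \<notin> ex t"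
proof -
  assume a: "t < D" "(c, x) \<in> set (Ls ! t)"
  have "\<forall>t < D. \<forall>(c, x) \<in> set (Ls ! t). c \<in> ex t \<and> x \<notin> ex t"
    using g unfolding ghz_circuit_def by (elim conjE)
  then have "\<forall>(c, x) \<in> set (Ls ! t). c \<in> ex t \<and> x \<notin> ex t" using a(1) by blast
  then show ?thesis using a(2) by (simp add: Ball_def)
qed

lemma G2: "t < D \<Longrightarrow> dq (Ls ! t)"
proof -
  assume a: "t < D"
  have "\<forall>t < D. dq (Ls ! t)"
    using g unfolding ghz_circuit_def by (elim conjE)
  then show ?thesis using a by blast
qed

lemma G3: "ex D = UNIV"
  using g unfolding ghz_circuit_def by (elim conjE)

lemma exc_iff: "q \<in> ex t \<longleftrightarrow> exc q \<le> t"
proof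
  assume "q \<in> ex t" then show "exc q \<le> t" unfolding exc_time_def by (rule Least_le)
next
  assume a: "exc q \<le> t"
  have "q \<in> ex D" using G3 by simp
  then have "q \<in> ex (exc q)" unfolding exc_time_def by (rule LeastI)
  then show "q \<in> ex t" using excited_mono[OF a, of v0 Ls] by blast
qed

lemma exc_v0: "exc v0 = 0"
  using exc_iff[of v0 0] excited_0[of v0 Ls] by simp

lemma exc_0: "exc q = 0 \<Longrightarrow> q = v0"
  using exc_iff[of q 0] excited_0[of v0 Ls] by simp

lemma target_ctrl: "exc q = Suc t \<Longrightarrow> t < D \<and> (\<exists>c. (c, q) \<in> set (Ls ! t))"
proof -
  assume a: "exc q = Suc t"
  have n1: "q \<notin> ex t" using exc_iff[of q t] a by simp
  have n2: "q \<in> ex (Suc t)" using exc_iff[of q "Suc t"] a by simp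
  have tD: "t < D"
  proof (rule ccontr)
    assume "\<not> t < D"
    then have "ex t = ex D" "ex (Suc t) = ex D" using excited_ge[of Ls t v0] excited_ge[of Ls "Suc t" v0] by simp_all
    then show False using n1 n2 by simp
  qed
  have "q \<in> snd ` set (Ls ! t)" using n1 n2 excited_Suc[OF tD, of v0] by simp
  then obtain g where "g \<in> set (Ls ! t)" "q = snd g" by (rule imageE)
  then have "(fst g, q) \<in> set (Ls ! t)" by simp
  then show ?thesis using tD by blast
qed

lemma ctrl_unique: "t < D \<Longrightarrow> (c, x) \<in> set (Ls ! t) \<Longrightarrow> (SOME c. (c, x) \<in> set (Ls ! t)) = c"
proof -
  assume a: "t < D" "(c, x) \<in> set (Ls ! t)"
  have U: "c' = c" if "(c', x) \<in> set (Ls ! t)" for c'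
  proof -
    have "(c', x) = (c, x)" by (rule dq_unique[OF G2[OF a(1)] that a(2)]) simp
    then show ?thesis by simp
  qed
  show ?thesis by (rule some_equality[of "\<lambda>c. (c, x) \<in> set (Ls ! t)"]) (fact a(2), fact U)
qed

lemma children:
  assumes p: "exc p \<le> n" and n: "n < D"
  shows "w \<in> Wset v0 Ls \<and> npar v0 Ls w = Loc p n \<longleftrightarrow>
     w = Loc p (Suc n) \<or> (\<exists>x. (p, x) \<in> set (Ls ! n) \<and> w = Loc x (Suc n))"
proof
  assume w: "w \<in> Wset v0 Ls \<and> npar v0 Ls w = Loc p n"
  then obtain q s where qs: "w = Loc q s" "exc q \<le> s" "s \<le> D" by (auto simp: Wset_def)
  then obtain s' where s': "s = Suc s'" using w by (cases s) auto
  show "w = Loc p (Suc n) \<or> (\<exists>x. (p, x) \<in> set (Ls ! n) \<and> w = Loc x (Suc n))"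
  proof (cases "exc q \<le> s'")
    case True then show ?thesis using w qs s' by auto
  next
    case False
    then have e: "exc q = Suc s'" using qs s' by simp
    from target_ctrl[OF e] obtain c where c: "(c, q) \<in> set (Ls ! s')" by blast
    have "npar v0 Ls w = Loc (SOME c. (c, q) \<in> set (Ls ! s')) s'" using qs s' False by simp
    then have "s' = n" "(SOME c. (c, q) \<in> set (Ls ! s')) = p" using w by auto
    moreover have "(SOME c. (c, q) \<in> set (Ls ! s')) = c" using ctrl_unique target_ctrl[OF e] c by blast
    ultimately show ?thesis using c qs s' by auto
  qed
next
  assume "w = Loc p (Suc n) \<or> (\<exists>x. (p, x) \<in> set (Ls ! n) \<and> w = Loc x (Suc n))"
  then show "w \<in> Wset v0 Ls \<and> npar v0 Ls w = Loc p n"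
  proof
    assume "w = Loc p (Suc n)" then show ?thesis using p n by (auto simp: Wset_def)
  next
    assume "\<exists>x. (p, x) \<in> set (Ls ! n) \<and> w = Loc x (Suc n)"
    then obtain x where x: "(p, x) \<in> set (Ls ! n)" "w = Loc x (Suc n)" by blast
    have "x \<notin> ex n" using G1[OF n x(1)] by simp
    moreover have "x \<in> ex (Suc n)" using excited_Suc[OF n] x(1) by force
    ultimately have e: "exc x = Suc n" using exc_iff by (metis le_SucE)
    then show ?thesis using x n ctrl_unique[OF n x(1)] by (auto simp: Wset_def)
  qed
qed

sublocale ptree "npar v0 Ls" nlvl "Wset v0 Ls" Start "Loc v0 0"
proof
  fix v show "nlvl (npar v0 Ls v) = nlvl v - 1" by (cases "(v0, Ls, v)" rule: npar.cases) auto
next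
  fix v :: "'q node" assume "nlvl v = 0" then show "v = Start" by (cases v) auto
next
  fix w :: "'q node" assume "w \<in> Wset v0 Ls" then show "0 < nlvl w" by (auto simp: Wset_def)
next
  fix w assume w: "w \<in> Wset v0 Ls" "0 < nlvl (npar v0 Ls w)"
  then obtain q s where qs: "w = Loc q s" "exc q \<le> s" "s \<le> D" by (auto simp: Wset_def)
  then obtain s' where s': "s = Suc s'" using w by (cases s) auto
  show "npar v0 Ls w \<in> Wset v0 Ls"
  proof (cases "exc q \<le> s'")
    case True then show ?thesis using qs s' by (auto simp: Wset_def)
  next
    case False
    then have e: "exc q = Suc s'" using qs s' by simp
    from target_ctrl[OF e] obtain c where c: "(c, q) \<in> set (Ls ! s')" "s' < D" by blast
    have "(SOME c. (c, q) \<in> set (Ls ! s')) = c" using ctrl_unique c by blast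
    moreover have "exc c \<le> s'" using G1[OF c(2) c(1)] exc_iff by blast
    ultimately show ?thesis using qs s' False c by (auto simp: Wset_def)
  qed
next
  fix w assume "w \<in> Wset v0 Ls" "nlvl w = 1"
  then show "w = Loc v0 0" using exc_0 by (auto simp: Wset_def)
next
  show "Loc v0 0 \<in> Wset v0 Ls" using exc_v0 by (auto simp: Wset_def)
next
  show "nlvl (Loc v0 0) = 1" by simp
qed

lemma tree_mem1: "{Start, Loc v0 0} \<in> tree_edges v0 Ls"
  unfolding tree_edges_def by (rule UnI1, rule UnI1) simp

lemma tree_mem2: "exc q \<le> t \<Longrightarrow> t < D \<Longrightarrow> {Loc q t, Loc q (Suc t)} \<in> tree_edges v0 Ls"
  unfolding tree_edges_def by (rule UnI1, rule UnI2) blast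

lemma tree_mem3: "t < D \<Longrightarrow> (c, x) \<in> set (Ls ! t) \<Longrightarrow> {Loc c t, Loc x (Suc t)} \<in> tree_edges v0 Ls"
  unfolding tree_edges_def by (rule UnI2) blast

lemma tree_cases:
  assumes "e \<in> tree_edges v0 Ls"
  obtains "e = {Start, Loc v0 0}"
      | q t where "e = {Loc q t, Loc q (Suc t)}" "exc q \<le> t" "t < D"
      | c x t where "e = {Loc c t, Loc x (Suc t)}" "t < D" "(c, x) \<in> set (Ls ! t)"
  using assms unfolding tree_edges_def
  apply (elim UnE)
  apply simp
  apply (elim CollectE exE conjE) apply blast
  apply (elim CollectE exE conjE) apply blast
  done

lemma tree_eq: "tree_edges v0 Ls = GE"
proof
  show "tree_edges v0 Ls \<subseteq> GE"
  proof
    fix e assume "e \<in> tree_edges v0 Ls"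
    then show "e \<in> GE"
    proof (cases rule: tree_cases)
      case 1
      have "e = {npar v0 Ls (Loc v0 0), Loc v0 0}" using 1 by simp
      then show ?thesis using R_W unfolding pGE_def by blast
    next
      case (2 q t)
      have "e = {npar v0 Ls (Loc q (Suc t)), Loc q (Suc t)}" using 2 by simp
      moreover have "Loc q (Suc t) \<in> Wset v0 Ls" using 2 by (auto simp: Wset_def)
      ultimately show ?thesis unfolding pGE_def by blast
    next
      case (3 c x t)
      have "exc c \<le> t" using G1[OF 3(2,3)] exc_iff by blast
      then have "Loc x (Suc t) \<in> Wset v0 Ls \<and> npar v0 Ls (Loc x (Suc t)) = Loc c t"
        using children[of c t "Loc x (Suc t)"] 3 by blast
      then have "e = {npar v0 Ls (Loc x (Suc t)), Loc x (Suc t)}" "Loc x (Suc t) \<in> Wset v0 Ls"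
        using 3 by auto
      then show ?thesis unfolding pGE_def by blast
    qed
  qed
next
  show "GE \<subseteq> tree_edges v0 Ls"
  proof
    fix e assume "e \<in> GE"
    then obtain w where w: "e = {npar v0 Ls w, w}" "w \<in> Wset v0 Ls" unfolding pGE_def by blast
    then obtain q s where qs: "w = Loc q s" "exc q \<le> s" "s \<le> D" unfolding Wset_def by blast
    show "e \<in> tree_edges v0 Ls"
    proof (cases s)
      case 0
      then have "q = v0" using exc_0 qs by simp
      then have "e = {Start, Loc v0 0}" using w qs 0 by simp
      then show ?thesis using tree_mem1 by simp
    next
      case (Suc t)
      show ?thesis
      proof (cases "exc q \<le> t")
        case True
        have "e = {Loc q t, Loc q (Suc t)}" using w qs Suc True by simp
        moreover have "t < D" using qs Suc by simp
        ultimately show ?thesis using True tree_mem2 by simp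
      next
        case False
        then have e: "exc q = Suc t" using qs Suc by simp
        from target_ctrl[OF e] obtain c where c: "(c, q) \<in> set (Ls ! t)" "t < D" by blast
        have "(SOME c. (c, q) \<in> set (Ls ! t)) = c" using ctrl_unique c by blast
        then have "e = {Loc c t, Loc q (Suc t)}" using w qs Suc False by simp
        then show ?thesis using c tree_mem3 by simp
      qed
    qed
  qed
qed

lemma desc_child:
  assumes v: "v \<in> Wset v0 Ls" and u: "0 < nlvl u" "nlvl u < nlvl v"
  shows "v \<in> desc u \<longleftrightarrow> (\<exists>w. w \<in> Wset v0 Ls \<and> npar v0 Ls w = u \<and> v \<in> desc w)"
proof
  assume "v \<in> desc u"
  then obtain n where n: "(npar v0 Ls ^^ n) v = u" unfolding pdesc_def by blast
  have l: "nlvl u = nlvl v - n" using n lvl_funpow by metis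
  then obtain m where m: "n = Suc m" using u by (cases n) auto
  define w where "w = (npar v0 Ls ^^ m) v"
  have "npar v0 Ls w = u" using n m w_def by simp
  moreover have "0 < nlvl w" using lvl_funpow[of m v] l m u w_def by simp
  then have "w \<in> Wset v0 Ls" using funpow_W[OF v] w_def by simp
  moreover have "v \<in> desc w" unfolding w_def pdesc_def by blast
  ultimately show "\<exists>w. w \<in> Wset v0 Ls \<and> npar v0 Ls w = u \<and> v \<in> desc w" by blast
next
  assume "\<exists>w. w \<in> Wset v0 Ls \<and> npar v0 Ls w = u \<and> v \<in> desc w"
  then obtain w where w: "npar v0 Ls w = u" "v \<in> desc w" by blast
  have "w \<in> desc u" using desc_par[of w u] w(1) by simp
  then show "v \<in> desc u" using desc_trans w(2) by blast
qed

lemma leaf_W: "Loc k D \<in> Wset v0 Ls"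
proof -
  have "exc k \<le> D" using exc_iff G3 by blast
  then show ?thesis unfolding Wset_def by blast
qed

lemma desc_step:
  assumes p: "exc p \<le> n" and n: "n < D"
  shows "Loc k D \<in> desc (Loc p n) \<longleftrightarrow> Loc k D \<in> desc (Loc p (Suc n))
     \<or> (\<exists>x. (p, x) \<in> set (Ls ! n) \<and> Loc k D \<in> desc (Loc x (Suc n)))"
proof -
  have "Loc k D \<in> desc (Loc p n) \<longleftrightarrow>
     (\<exists>w. w \<in> Wset v0 Ls \<and> npar v0 Ls w = Loc p n \<and> Loc k D \<in> desc w)"
    using desc_child[OF leaf_W] n by simp
  also have "\<dots> \<longleftrightarrow> (\<exists>w. (w = Loc p (Suc n) \<or> (\<exists>x. (p, x) \<in> set (Ls ! n) \<and> w = Loc x (Suc n)))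
      \<and> Loc k D \<in> desc w)"
    using children[OF p n] by blast
  finally show ?thesis by blast
qed

lemma leaf_desc: "Loc k D \<in> desc (Loc p D) \<longleftrightarrow> p = k"
proof
  assume "Loc k D \<in> desc (Loc p D)"
  then have "Loc k D = Loc p D" using desc_eq[of "Loc k D" "Loc p D"] by simp
  then show "p = k" by simp
qed simp

lemma phys:
  assumes "t \<le> D"
  shows "fst (backprop Ls t (ZZ i j)) = (\<lambda>_. False) \<and>
    (\<forall>p. exc p \<le> t \<longrightarrow> snd (backprop Ls t (ZZ i j)) p =
       ((Loc i D \<in> desc (Loc p t)) \<noteq> (Loc j D \<in> desc (Loc p t))))"
  using assms
proof (induction t rule: inc_induct)
  case base
  show ?case unfolding bp_end by (simp add: ZZ_def leaf_desc)
next
  case (step n)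
  let ?P = "backprop Ls (Suc n) (ZZ i j)"
  have bp: "backprop Ls n (ZZ i j) = fold cnot_conj (Ls ! n) ?P"
    using bp_Suc[OF step(2)] by (simp add: layer_conj_def)
  have f: "fst (backprop Ls n (ZZ i j)) = (\<lambda>_. False)" unfolding bp
    using fold_fst step(3) by blast
  have s: "snd (backprop Ls n (ZZ i j)) p =
       ((Loc i D \<in> desc (Loc p n)) \<noteq> (Loc j D \<in> desc (Loc p n)))" if p: "exc p \<le> n" for p
  proof (cases "\<exists>x. (p, x) \<in> set (Ls ! n)")
    case True
    then obtain x where x: "(p, x) \<in> set (Ls ! n)" by blast
    have xu: "x' = x" if "(p, x') \<in> set (Ls ! n)" for x'
    proof -
      have "(p, x') = (p, x)" by (rule dq_unique[OF G2[OF step(2)] that x]) simp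
      then show ?thesis by simp
    qed
    have pnx: "p \<noteq> x" using G1[OF step(2) x] exc_iff p by blast
    have ex: "exc x \<le> Suc n"
    proof -
      have "x \<in> ex (Suc n)" using excited_Suc[OF step(2)] x by force
      then show ?thesis using exc_iff by blast
    qed
    have ds: "Loc k D \<in> desc (Loc p n) \<longleftrightarrow>
        ((Loc k D \<in> desc (Loc p (Suc n))) \<noteq> (Loc k D \<in> desc (Loc x (Suc n))))" for k
    proof -
      have ex1: "\<not> (Loc k D \<in> desc (Loc p (Suc n)) \<and> Loc k D \<in> desc (Loc x (Suc n)))"
      proof
        assume "Loc k D \<in> desc (Loc p (Suc n)) \<and> Loc k D \<in> desc (Loc x (Suc n))"
        then have "Loc p (Suc n) = Loc x (Suc n)" using desc_same_lvl by force
        then show False using pnx by simp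
      qed
      show ?thesis using desc_step[OF p step(2), of k] xu x ex1 by blast
    qed
    have "snd (backprop Ls n (ZZ i j)) p = (snd ?P p \<noteq> snd ?P x)"
      unfolding bp by (rule fold_snd_ctrl[OF G2[OF step(2)] x])
    also have "\<dots> = (((Loc i D \<in> desc (Loc p (Suc n))) \<noteq> (Loc j D \<in> desc (Loc p (Suc n)))) \<noteq>
        ((Loc i D \<in> desc (Loc x (Suc n))) \<noteq> (Loc j D \<in> desc (Loc x (Suc n)))))"
      using step(3) p ex by simp
    finally show ?thesis using ds[of i] ds[of j] by blast
  next
    case False
    have ds: "Loc k D \<in> desc (Loc p n) \<longleftrightarrow> Loc k D \<in> desc (Loc p (Suc n))" for k
      using desc_step[OF p step(2), of k] False by blast
    have "snd (backprop Ls n (ZZ i j)) p = snd ?P p"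
      unfolding bp by (rule fold_snd_other) (use False in blast)
    then show ?thesis using step(3) p ds by simp
  qed
  show ?case using f s by blast
qed

lemma main:
  assumes q: "exc q \<le> t" and t: "t \<le> D" and E: "E = X_at q \<or> E = Y_at q"
  shows "detected Ls E t i j \<longleftrightarrow> loc_edge v0 Ls q t \<in> S_set v0 Ls i j"
proof -
  let ?R = "backprop Ls t (ZZ i j)"
  have ph: "fst ?R = (\<lambda>_. False)"
    "snd ?R q = ((Loc i D \<in> desc (Loc q t)) \<noteq> (Loc j D \<in> desc (Loc q t)))"
    using phys[OF t] q by auto
  have fE: "fst E = (\<lambda>p. p = q)" using E by (auto simp: X_at_def Y_at_def)
  have c1: "{p. fst E p \<and> snd ?R p} = (if snd ?R q then {q} else {})" using fE by auto
  have c2: "{p. snd E p \<and> fst ?R p} = {}" using ph by auto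
  have det: "detected Ls E t i j \<longleftrightarrow> snd ?R q"
    unfolding detected_def anticommute_def c1 c2 by simp
  have uW: "Loc q t \<in> Wset v0 Ls" using q t unfolding Wset_def by blast
  have le: "loc_edge v0 Ls q t = {npar v0 Ls (Loc q t), Loc q t}"
    unfolding loc_edge_def tree_eq using loc_edge_main[OF uW] by simp
  have "loc_edge v0 Ls q t \<in> S_set v0 Ls i j \<longleftrightarrow>
     ((Loc i D \<in> desc (Loc q t)) \<noteq> (Loc j D \<in> desc (Loc q t)))"
    unfolding le S_set_def Let_def tree_eq using S_main[OF uW leaf_W leaf_W] by simp
  then show ?thesis using det ph by simp
qed

end


theorem lemma1:
  fixes v0 i j q :: "'q::finite" and Ls :: "'q layer list" and t :: nat and E :: "'q pauli"
  assumes "ghz_circuit v0 Ls"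
    and "i \<noteq> j"
    and "exc_time v0 Ls q \<le> t" and "t \<le> length Ls"
    and "E = X_at q \<or> E = Y_at q"
  shows "detected Ls E t i j \<longleftrightarrow> loc_edge v0 Ls q t \<in> S_set v0 Ls i j"
proof -
  interpret ghz v0 Ls by (rule ghz.intro) (rule assms(1))
  show ?thesis using main assms(3,4,5) by blast
qed

end
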